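(* Assume (A). Let $\psi:H\to\mathbb C$ be the Lévy exponent of $Z$, i.e. the continuous function with $\psi(0)=0$ and $\mathbb E\exp(i\langle y,Z(s)\rangle_H)=\exp(s\psi(y))$ for all $s\ge0$, $y\in H$. Then for every $t>0$ and every $\lambda\in H$, $$\mathbb E\exp\Big(i\Big\langle\lambda,\int_{(0,t]}\mathcal R(t-\tau)\,dZ(\tau)\Big\rangle_H\Big)=\exp\Big(\int_0^t\psi\big(\mathcal R(t-s)^*\lambda\big)\,ds\Big).$$
   Context: $H$ is a real separable Hilbert space with inner product $\langle\cdot,\cdot\rangle_H$; $A$ is a closed densely defined linear operator in $H$, $a\in L^1_{\mathrm{loc}}(\mathbb R_+)$. Assumption (A): the Volterra equation $X(t)=\int_0^t a(t-\tau)AX(\tau)\,d\tau+X_0+Z(t)$ is well-posed with resolvent family $\{\mathcal R(t)\}_{t\ge0}$ (bounded operators, uniformly bounded on compact intervals, strongly continuous, $\mathcal R(0)=I$, satisfying $\mathcal R(t)x=x+\int_0^t a(t-\tau)A\mathcal R(\tau)x\,d\tau$ for $x\in\mathcal D(A)$), the map $t\mapsto\mathcal R(t)$ has bounded variation on compact intervals, and $Z$ is an $H$-valued Lévy process (independent stationary increments, continuous in probability, càdlàg, $Z(0)=0$). The integral $\int_{(0,t]}\mathcal R(t-\tau)\,dZ(\tau)$ is the limit in probability of Riemann–Stieltjes sums $\sum_i\mathcal R(t-s_i)(Z(r_i)-Z(r_{i-1}))$ over partitions $0=r_0<\dots<r_n=t$ with mesh $\to0$, $s_i\in[r_{i-1},r_i]$.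 *)

theory Defs
  imports "HOL-Probability.Probability"
begin

definition is_partition :: "real \<Rightarrow> real \<Rightarrow> nat \<Rightarrow> (nat \<Rightarrow> real) \<Rightarrow> bool" where
  "is_partition a b n r \<longleftrightarrow> 0 < n \<and> r 0 = a \<and> r n = b \<and> (\<forall>i<n. r i < r (Suc i))"

definition mesh :: "nat \<Rightarrow> (nat \<Rightarrow> real) \<Rightarrow> real" where
  "mesh n r = Max ((\<lambda>i. r (Suc i) - r i) ` {..<n})"

definition closed_densely_defined_operator ::
  "('h::real_normed_vector) set \<Rightarrow> ('h \<Rightarrow> 'h) \<Rightarrow> bool" where
  "closed_densely_defined_operator DA A \<longleftrightarrow>
     subspace DA \<and>
     (\<forall>x\<in>DA. \<forall>y\<in>DA. A (x + y) = A x + A y) \<and>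
     (\<forall>x\<in>DA. \<forall>c. A (c *\<^sub>R x) = c *\<^sub>R A x) \<and>
     closure DA = UNIV \<and>
     closed {(x, A x) | x. x \<in> DA}"

definition locally_integrable_Rplus :: "(real \<Rightarrow> real) \<Rightarrow> bool" where
  "locally_integrable_Rplus a \<longleftrightarrow> (\<forall>T\<ge>0. set_integrable lborel {0..T} a)"

definition bv_on_compacts :: "(real \<Rightarrow> 'h \<Rightarrow>\<^sub>L 'h::real_normed_vector) \<Rightarrow> bool" where
  "bv_on_compacts R \<longleftrightarrow> (\<forall>T>0. \<exists>V. \<forall>n r. is_partition 0 T n r \<longrightarrow>
       (\<Sum>i<n. norm (R (r (Suc i)) - R (r i))) \<le> V)"

definition resolvent_family ::
  "(real \<Rightarrow> real) \<Rightarrow> ('h::{real_inner,complete_space,second_countable_topology}) set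
     \<Rightarrow> ('h \<Rightarrow> 'h) \<Rightarrow> (real \<Rightarrow> 'h \<Rightarrow>\<^sub>L 'h) \<Rightarrow> bool" where
  "resolvent_family a DA A R \<longleftrightarrow>
     (\<forall>T\<ge>0. \<exists>C. \<forall>t\<in>{0..T}. norm (R t) \<le> C) \<and>
     (\<forall>x. continuous_on {0..} (\<lambda>t. blinfun_apply (R t) x)) \<and>
     R 0 = id_blinfun \<and>
     (\<forall>t\<ge>0. \<forall>x\<in>DA. blinfun_apply (R t) x \<in> DA) \<and>
     (\<forall>t\<ge>0. \<forall>x\<in>DA.
        set_integrable lborel {0..t} (\<lambda>\<tau>. a (t - \<tau>) *\<^sub>R A (blinfun_apply (R \<tau>) x)) \<and>
        blinfun_apply (R t) x =
          x + (LINT \<tau>:{0..t}|lborel. a (t - \<tau>) *\<^sub>R A (blinfun_apply (R \<tau>) x)))"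

definition levy_process :: "'a measure \<Rightarrow> (real \<Rightarrow> 'a \<Rightarrow> 'h::{real_normed_vector,second_countable_topology}) \<Rightarrow> bool" where
  "levy_process M Z \<longleftrightarrow>
     (\<forall>t\<ge>0. Z t \<in> borel_measurable M) \<and>
     (\<forall>\<omega>\<in>space M. Z 0 \<omega> = 0) \<and>
     \<comment> \<open>independent increments\<close>
     (\<forall>n t. (\<forall>i<n. 0 \<le> t i \<and> t i < t (Suc i)) \<longrightarrow>
        prob_space.indep_vars M (\<lambda>_. borel) (\<lambda>i \<omega>. Z (t (Suc i)) \<omega> - Z (t i) \<omega>) {..<n}) \<and>
     \<comment> \<open>stationary increments\<close>
     (\<forall>s\<ge>0. \<forall>h\<ge>0. distr M borel (\<lambda>\<omega>. Z (s + h) \<omega> - Z s \<omega>) = distr M borel (Z h)) \<and>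
     \<comment> \<open>continuity in probability\<close>
     (\<forall>t\<ge>0. \<forall>\<epsilon>>0. ((\<lambda>s. measure M {\<omega>\<in>space M. \<epsilon> < norm (Z s \<omega> - Z t \<omega>)}) \<longlongrightarrow> 0)
                     (at t within {0..})) \<and>
     \<comment> \<open>cadlag paths\<close>
     (\<forall>\<omega>\<in>space M. \<forall>t\<ge>0. continuous (at_right t) (\<lambda>s. Z s \<omega>)) \<and>
     (\<forall>\<omega>\<in>space M. \<forall>t>0. \<exists>l. ((\<lambda>s. Z s \<omega>) \<longlongrightarrow> l) (at_left t))"

text \<open>I is the stochastic convolution integral over (0,t] of R(t - .) against dZ:
  the limit in probability of the Riemann--Stieltjes sums
  sum_i R(t - s_i)(Z(r_i) - Z(r_{i-1})) as the mesh of the partition tends to 0,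
  for arbitrary tags s_i in [r_{i-1}, r_i].\<close>
definition stoch_conv_integral ::
  "'a measure \<Rightarrow> (real \<Rightarrow> 'h \<Rightarrow>\<^sub>L 'h::{real_normed_vector,second_countable_topology})
     \<Rightarrow> (real \<Rightarrow> 'a \<Rightarrow> 'h) \<Rightarrow> real \<Rightarrow> ('a \<Rightarrow> 'h) \<Rightarrow> bool" where
  "stoch_conv_integral M R Z t I \<longleftrightarrow>
     I \<in> borel_measurable M \<and>
     (\<forall>\<epsilon>>0. \<forall>\<eta>>0. \<exists>\<delta>>0. \<forall>n r s.
        is_partition 0 t n r \<and> mesh n r < \<delta> \<and> (\<forall>i<n. r i \<le> s i \<and> s i \<le> r (Suc i)) \<longrightarrow>
        measure M {\<omega>\<in>space M.
           \<epsilon> < norm ((\<Sum>i<n. blinfun_apply (R (t - s i)) (Z (r (Suc i)) \<omega> - Z (r i) \<omega>)) - I \<omega>)} < \<eta>)"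

end

theory Submission
  imports Defs
begin

lemma proj_exists:
  fixes K :: "'h::{real_inner,complete_space} set" and x0 :: 'h
  assumes "closed K" "K \<noteq> {}" "\<And>a b. a \<in> K \<Longrightarrow> b \<in> K \<Longrightarrow> (a + b) /\<^sub>R 2 \<in> K"
  shows "\<exists>p\<in>K. \<forall>k\<in>K. norm (x0 - p)^2 \<le> norm (x0 - k)^2"
proof -
  define D where "D = (\<lambda>k. norm (x0 - k)^2) ` K"
  define d where "d = Inf D"
  have bdd: "bdd_below D" unfolding D_def by (rule bdd_belowI[of _ 0]) auto
  have Dne: "D \<noteq> {}" using assms(2) unfolding D_def by auto
  have dle: "d \<le> norm (x0 - k)^2" if "k \<in> K" for k
    unfolding d_def by (rule cInf_lower[OF _ bdd]) (use that D_def in auto)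
  have "\<exists>k\<in>K. norm (x0 - k)^2 < d + 1/(Suc n)" for n
  proof -
    have "Inf D < d + 1/Suc n" unfolding d_def by simp
    from cInf_lessD[OF Dne this] show ?thesis unfolding D_def by auto
  qed
  then obtain k where kK: "\<And>n. k n \<in> K" and kd: "\<And>n. norm (x0 - k n)^2 < d + 1/(Suc n)"
    by metis
  have par: "norm (k n - k m)^2 < 2/Suc n + 2/Suc m" for n m
  proof -
    have mid: "d \<le> norm (x0 - (k n + k m) /\<^sub>R 2)^2" using dle assms(3)[OF kK kK] by blast
    have "norm (k n - k m)^2 = 2 * norm (x0 - k n)^2 + 2 * norm (x0 - k m)^2 - 4 * norm (x0 - (k n + k m) /\<^sub>R 2)^2"
      unfolding power2_norm_eq_inner by (simp add: algebra_simps inner_commute)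
    then show ?thesis using mid kd[of n] kd[of m] by linarith
  qed
  have "Cauchy k"
  proof (rule metric_CauchyI)
    fix e :: real assume "0 < e"
    obtain N :: nat where N: "4 / e^2 < N" using reals_Archimedean2 by blast
    have "dist (k m) (k n) < e" if "m \<ge> N" "n \<ge> N" for m n
    proof -
      have "2/Suc n \<le> 2/Suc N" "2/Suc m \<le> 2/Suc N" using that by (auto simp: divide_left_mono)
      moreover have "4 / Suc N < e^2"
      proof -
        have e2: "0 < e^2" using \<open>0<e\<close> by simp
        have "4 < e^2 * N" using N e2 by (simp add: divide_less_eq mult.commute)
        also have "\<dots> \<le> e^2 * Suc N" using e2 by simp
        finally show ?thesis by (simp add: divide_less_eq mult.commute)
      qed
      ultimately have "norm (k m - k n)^2 < e^2" using par[of m n] by linarith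
      then show ?thesis using \<open>0<e\<close> by (simp add: dist_norm power_less_imp_less_base)
    qed
    then show "\<exists>M. \<forall>m\<ge>M. \<forall>n\<ge>M. dist (k m) (k n) < e" by blast
  qed
  then obtain p where kp: "k \<longlonglongrightarrow> p" using Cauchy_convergent_iff convergent_def by blast
  have pK: "p \<in> K" using closed_sequentially[OF assms(1)] kK kp by blast
  have "(\<lambda>n. norm (x0 - k n)^2) \<longlonglongrightarrow> norm (x0 - p)^2"
    by (intro tendsto_intros kp)
  moreover have "(\<lambda>n. d + 1/Suc n) \<longlonglongrightarrow> d + 0"
    by (intro tendsto_intros LIMSEQ_inverse_real_of_nat[unfolded inverse_eq_divide])
  ultimately have "norm (x0 - p)^2 \<le> d"
    using kd by (intro LIMSEQ_le[where X="\<lambda>n. norm (x0 - k n)^2" and Y="\<lambda>n. d + 1/Suc n"]) (auto intro: less_imp_le)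
  then show ?thesis using pK dle by (meson order_trans)
qed

lemma riesz:
  fixes g :: "'h::{real_inner,complete_space} \<Rightarrow> real"
  assumes g: "bounded_linear g"
  shows "\<exists>v. \<forall>x. g x = v \<bullet> x"
proof (cases "\<forall>x. g x = 0")
  case True then show ?thesis by (intro exI[of _ 0]) simp
next
  case False
  then obtain x0 where gx0: "g x0 \<noteq> 0" by blast
  interpret g: bounded_linear g by fact
  define K where "K = {x. g x = 0}"
  have "closed K" unfolding K_def
    by (intro closed_Collect_eq continuous_intros g.continuous_on continuous_on_id)
  moreover have "K \<noteq> {}" unfolding K_def using g.zero by blast
  moreover have "(a + b) /\<^sub>R 2 \<in> K" if "a \<in> K" "b \<in> K" for a b
    using that unfolding K_def by (simp add: g.add g.scaleR)
  ultimately have "\<exists>p\<in>K. \<forall>k\<in>K. norm (x0 - p)^2 \<le> norm (x0 - k)^2"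
    by (rule proj_exists)
  then obtain p where pK: "p \<in> K" and pmin: "\<And>k. k \<in> K \<Longrightarrow> norm (x0 - p)^2 \<le> norm (x0 - k)^2"
    by blast
  define z where "z = x0 - p"
  have gz: "g z = g x0" using pK unfolding z_def K_def by (simp add: g.diff)
  have orth: "z \<bullet> k = 0" if "k \<in> K" for k
  proof (cases "k = 0")
    case True then show ?thesis by simp
  next
    case False
    define c where "c = (z \<bullet> k) / (k \<bullet> k)"
    have kk: "0 < k \<bullet> k" using False by simp
    have "p + c *\<^sub>R k \<in> K" using pK that unfolding K_def by (simp add: g.add g.scaleR)
    from pmin[OF this] have "norm z ^2 \<le> norm (z - c *\<^sub>R k)^2" unfolding z_def by (simp add: algebra_simps)
    then have "0 \<le> c * c * (k \<bullet> k) - 2 * c * (z \<bullet> k)"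
      unfolding power2_norm_eq_inner by (simp add: algebra_simps inner_commute)
    also have "c * c * (k \<bullet> k) - 2 * c * (z \<bullet> k) = - ((z \<bullet> k)^2) / (k \<bullet> k)"
      unfolding c_def using kk by (simp add: field_simps power2_eq_square)
    finally have "(z \<bullet> k)^2 \<le> 0" using kk by (simp add: divide_le_0_iff)
    then show ?thesis by simp
  qed
  have zz: "0 < z \<bullet> z" using gz gx0 by (cases "z = 0") auto
  show ?thesis
  proof (intro exI[of _ "(g z / (z \<bullet> z)) *\<^sub>R z"] allI)
    fix x
    have "x - (g x / g z) *\<^sub>R z \<in> K" unfolding K_def using gz gx0 by (simp add: g.diff g.scaleR)
    from orth[OF this] have "z \<bullet> x = (g x / g z) * (z \<bullet> z)" by (simp add: inner_diff_right)
    then show "g x = (g z / (z \<bullet> z)) *\<^sub>R z \<bullet> x" using zz gz gx0 by (simp add: field_simps)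
  qed
qed

lemma adjoint_prop:
  fixes F :: "'h::{real_inner,complete_space} \<Rightarrow>\<^sub>L 'h"
  shows "blinfun_apply F x \<bullet> y = x \<bullet> adjoint (blinfun_apply F) y"
proof -
  have "\<forall>y. \<exists>v. \<forall>x. blinfun_apply F x \<bullet> y = v \<bullet> x"
    by (intro allI riesz bounded_linear_compose[OF bounded_linear_inner_left] blinfun.bounded_linear_right)
  then obtain f' where f': "\<And>x y. blinfun_apply F x \<bullet> y = f' y \<bullet> x" by metis
  have "adjoint (blinfun_apply F) = f'"
    by (rule adjoint_unique) (metis f' inner_commute)
  then show ?thesis by (metis f' inner_commute)
qed

lemma adjoint_diff_bound:
  fixes F G :: "'h::{real_inner,complete_space} \<Rightarrow>\<^sub>L 'h"
  shows "norm (adjoint (blinfun_apply F) y - adjoint (blinfun_apply G) y) \<le> norm (F - G) * norm y"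
proof -
  define d where "d = adjoint (blinfun_apply F) y - adjoint (blinfun_apply G) y"
  have "norm d ^2 = d \<bullet> d" by (simp add: power2_norm_eq_inner)
  also have "\<dots> = adjoint (blinfun_apply F) y \<bullet> d - adjoint (blinfun_apply G) y \<bullet> d"
    unfolding d_def by (rule inner_diff_left)
  also have "\<dots> = blinfun_apply F d \<bullet> y - blinfun_apply G d \<bullet> y"
    using adjoint_prop[of F d y] adjoint_prop[of G d y] by (metis inner_commute)
  also have "\<dots> = blinfun_apply (F - G) d \<bullet> y"
    by (simp add: blinfun.diff_left inner_diff_left)
  also have "\<dots> \<le> norm (blinfun_apply (F - G) d) * norm y" by (metis Cauchy_Schwarz_ineq2 abs_le_iff)
  also have "\<dots> \<le> norm (F - G) * norm d * norm y"
    by (intro mult_right_mono norm_blinfun) simp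
  finally have "norm d * norm d \<le> (norm (F - G) * norm y) * norm d" by (simp add: power2_eq_square algebra_simps)
  then have *: "norm d \<le> norm (F - G) * norm y"
  proof (cases "norm d = 0")
    case True then show ?thesis by simp
  next
    case False then have "0 < norm d" by simp
    with \<open>norm d * norm d \<le> (norm (F - G) * norm y) * norm d\<close> show ?thesis
      by (rule mult_right_le_imp_le)
  qed
  then show ?thesis unfolding d_def .
qed


lemma bv_pairs:
  assumes bv: "bv_on_compacts R" and T: "T > 0"
  obtains V where "\<And>K x. 0 < K \<Longrightarrow> 0 < x 0 \<Longrightarrow> (\<forall>i. Suc i < 2*K \<longrightarrow> x i < x (Suc i)) \<Longrightarrow> x (2*K - 1) < T \<Longrightarrow>
     (\<Sum>k<K. norm (R (x (2*k+1)) - R (x (2*k)))) \<le> V"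
proof -
  from bv T obtain V where V: "\<And>n r. is_partition 0 T n r \<Longrightarrow> (\<Sum>i<n. norm (R (r (Suc i)) - R (r i))) \<le> V"
    unfolding bv_on_compacts_def by blast
  show ?thesis
  proof (rule that[of V])
    fix K :: nat and x :: "nat \<Rightarrow> real"
    assume K: "0 < K" and x0: "0 < x 0" and inc: "\<forall>i. Suc i < 2*K \<longrightarrow> x i < x (Suc i)" and xT: "x (2*K - 1) < T"
    define r where "r i = (if i = 0 then 0 else if i = 2*K+1 then T else x (i - 1))" for i
    have "is_partition 0 T (2*K+1) r"
      unfolding is_partition_def
    proof (intro conjI allI impI)
      show "r 0 = 0" "r (2*K+1) = T" by (auto simp: r_def)
      fix i assume i: "i < 2*K+1"
      show "r i < r (Suc i)"
      proof (cases "i = 0")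
        case True then show ?thesis using x0 K by (simp add: r_def)
      next
        case False
        show ?thesis
        proof (cases "i = 2*K")
          case True then show ?thesis using xT K by (simp add: r_def)
        next
          case False
          with \<open>i \<noteq> 0\<close> i have "Suc (i - 1) < 2*K" by simp
          with inc have "x (i-1) < x (Suc (i-1))" by blast
          then show ?thesis using \<open>i \<noteq> 0\<close> False i by (simp add: r_def)
        qed
      qed
    qed simp
    then have "(\<Sum>i<2*K+1. norm (R (r (Suc i)) - R (r i))) \<le> V" by (rule V)
    moreover have "(\<Sum>k<K. norm (R (x (2*k+1)) - R (x (2*k)))) = (\<Sum>i\<in>(\<lambda>k. 2*k+1) ` {..<K}. norm (R (r (Suc i)) - R (r i)))"
      by (subst sum.reindex) (auto simp: inj_on_def r_def)
    moreover have "(\<Sum>i\<in>(\<lambda>k. 2*k+1) ` {..<K}. norm (R (r (Suc i)) - R (r i))) \<le> (\<Sum>i<2*K+1. norm (R (r (Suc i)) - R (r i)))"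
      by (rule sum_mono2) auto
    ultimately show "(\<Sum>k<K. norm (R (x (2*k+1)) - R (x (2*k)))) \<le> V" by linarith
  qed
qed

lemma chain_contra_asc:
  assumes bv: "bv_on_compacts R" and e: "0 < e" and T: "0 < T"
    and q1: "\<And>k. fst (q k) < snd (q k)" and q2: "\<And>k. snd (q k) < fst (q (Suc k))"
    and q3: "\<And>k. 0 < fst (q k)" and q4: "\<And>k. snd (q k) < T"
    and q5: "\<And>k. e < norm (R (snd (q k)) - R (fst (q k)))"
  shows False
proof -
  obtain V where V: "\<And>K x. 0 < K \<Longrightarrow> 0 < x 0 \<Longrightarrow> (\<forall>i. Suc i < 2*K \<longrightarrow> x i < x (Suc i)) \<Longrightarrow> x (2*K - 1) < T \<Longrightarrow>
     (\<Sum>k<K. norm (R (x (2*k+1)) - R (x (2*k)))) \<le> V"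
    using bv_pairs[OF bv T] by blast
  obtain K' :: nat where K': "V / e < K'" using reals_Archimedean2 by blast
  define K where "K = Suc K'"
  have K: "V / e < K" using K' unfolding K_def by simp
  have K0: "0 < K" unfolding K_def by simp
  define x where "x i = (if even i then fst (q (i div 2)) else snd (q (i div 2)))" for i
  have "(\<Sum>k<K. norm (R (x (2*k+1)) - R (x (2*k)))) \<le> V"
  proof (rule V[OF K0])
    show "0 < x 0" using q3 by (simp add: x_def)
    show "\<forall>i. Suc i < 2*K \<longrightarrow> x i < x (Suc i)"
    proof (intro allI impI)
      fix i
      show "x i < x (Suc i)"
      proof (cases "even i")
        case True then show ?thesis using q1 by (simp add: x_def)
      next
        case False
        then have "Suc i div 2 = Suc (i div 2)" by presburger
        then show ?thesis using False q2 by (simp add: x_def)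
      qed
    qed
    have "odd (2*K - 1)" using K0 by simp
    then show "x (2*K - 1) < T" using q4 by (simp add: x_def)
  qed
  moreover have "(\<Sum>k<K. norm (R (x (2*k+1)) - R (x (2*k)))) = (\<Sum>k<K. norm (R (snd (q k)) - R (fst (q k))))"
    by (simp add: x_def)
  moreover have "(\<Sum>k<K. e) < (\<Sum>k<K. norm (R (snd (q k)) - R (fst (q k))))"
    using K0 q5 by (intro sum_strict_mono) auto
  ultimately have "K * e < V" by simp
  moreover have "V < K * e" using K e by (simp add: divide_less_eq)
  ultimately show False by simp
qed

lemma chain_contra_desc:
  assumes bv: "bv_on_compacts R" and e: "0 < e" and T: "0 < T"
    and q1: "\<And>k. fst (q k) < snd (q k)" and q2: "\<And>k. snd (q (Suc k)) < fst (q k)"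
    and q3: "\<And>k. 0 < fst (q k)" and q4: "\<And>k. snd (q k) < T"
    and q5: "\<And>k. e < norm (R (snd (q k)) - R (fst (q k)))"
  shows False
proof -
  obtain V where V: "\<And>K x. 0 < K \<Longrightarrow> 0 < x 0 \<Longrightarrow> (\<forall>i. Suc i < 2*K \<longrightarrow> x i < x (Suc i)) \<Longrightarrow> x (2*K - 1) < T \<Longrightarrow>
     (\<Sum>k<K. norm (R (x (2*k+1)) - R (x (2*k)))) \<le> V"
    using bv_pairs[OF bv T] by blast
  obtain K' :: nat where K': "V / e < K'" using reals_Archimedean2 by blast
  define K where "K = Suc K'"
  have K: "V / e < K" using K' unfolding K_def by simp
  have K0: "0 < K" unfolding K_def by simp
  define x where "x i = (if even i then fst (q (K - Suc (i div 2))) else snd (q (K - Suc (i div 2))))" for i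
  have "(\<Sum>k<K. norm (R (x (2*k+1)) - R (x (2*k)))) \<le> V"
  proof (rule V[OF K0])
    show "0 < x 0" using q3 by (simp add: x_def)
    show "\<forall>i. Suc i < 2*K \<longrightarrow> x i < x (Suc i)"
    proof (intro allI impI)
      fix i
      show "Suc i < 2 * K \<Longrightarrow> x i < x (Suc i)"
      proof (cases "even i")
        case True then show "x i < x (Suc i)" using q1 by (simp add: x_def)
      next
        case False
        then have a: "Suc i div 2 = Suc (i div 2)" by presburger
        assume "Suc i < 2 * K"
        then have b: "K - Suc (i div 2) = Suc (K - Suc (Suc i div 2))" using a False by presburger
        show ?thesis using False q2[of "K - Suc (Suc i div 2)"] unfolding x_def a[symmetric] b[symmetric] by simp
      qed
    qed
    have "odd (2*K - 1)" using K0 by simp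
    moreover have "(2*K - 1) div 2 = K - 1" using K0 by presburger
    ultimately show "x (2*K - 1) < T" using q4 K0 by (simp add: x_def)
  qed
  moreover have "(\<Sum>k<K. norm (R (x (2*k+1)) - R (x (2*k)))) = (\<Sum>k<K. norm (R (snd (q (K - Suc k))) - R (fst (q (K - Suc k)))))"
    by (simp add: x_def)
  moreover have "(\<Sum>k<K. norm (R (snd (q (K - Suc k))) - R (fst (q (K - Suc k))))) = (\<Sum>k<K. norm (R (snd (q k)) - R (fst (q k))))"
    by (rule sum.nat_diff_reindex)
  moreover have "(\<Sum>k<K. e) < (\<Sum>k<K. norm (R (snd (q k)) - R (fst (q k))))"
    using K0 q5 by (intro sum_strict_mono) auto
  ultimately have "K * e < V" by simp
  moreover have "V < K * e" using K e by (simp add: divide_less_eq)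
  ultimately show False by simp
qed


lemma jump_split:
  fixes R :: "real \<Rightarrow> 'h::real_normed_vector \<Rightarrow>\<^sub>L 'h"
  assumes strong: "\<forall>x. continuous_on {0..} (\<lambda>t. blinfun_apply (R t) x)" and u: "0 \<le> u"
    and e: "0 < e" and jump: "e < norm (R v - R u)"
  shows "\<exists>\<eta>>0. \<forall>w\<ge>0. \<bar>w - u\<bar> < \<eta> \<longrightarrow> e/2 < norm (R v - R w)"
proof -
  have "\<exists>x. e * norm x < norm (blinfun_apply (R v - R u) x)"
  proof (rule ccontr)
    assume "\<not> ?thesis"
    then have "norm (R v - R u) \<le> e" using e by (intro norm_blinfun_bound) (auto simp: not_less)
    then show False using jump by simp
  qed
  then obtain x where x: "e * norm x < norm (blinfun_apply (R v - R u) x)" by blast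
  have nx: "0 < norm x"
  proof (rule ccontr)
    assume "\<not> 0 < norm x" then have "x = 0" by simp
    then show False using x by simp
  qed
  have "continuous_on {0..} (\<lambda>t. blinfun_apply (R t) x)" using strong by blast
  then obtain d where d: "d > 0" and dd: "\<And>w. w \<in> {0..} \<Longrightarrow> dist w u < d \<Longrightarrow>
      dist (blinfun_apply (R w) x) (blinfun_apply (R u) x) < e * norm x / 2"
    using u e nx unfolding continuous_on_iff by (metis atLeast_iff half_gt_zero mult_pos_pos)
  show ?thesis
  proof (intro exI[of _ d] conjI allI impI d)
    fix w :: real assume w: "0 \<le> w" "\<bar>w - u\<bar> < d"
    have c: "norm (blinfun_apply (R w) x - blinfun_apply (R u) x) < e * norm x / 2"
      using dd[of w] w by (simp add: dist_norm dist_real_def)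
    have "blinfun_apply (R v - R u) x = blinfun_apply (R v - R w) x + (blinfun_apply (R w) x - blinfun_apply (R u) x)"
      by (simp add: blinfun.diff_left)
    then have "norm (blinfun_apply (R v - R u) x) \<le> norm (blinfun_apply (R v - R w) x) + norm (blinfun_apply (R w) x - blinfun_apply (R u) x)"
      by (metis norm_triangle_ineq)
    also have "norm (blinfun_apply (R v - R w) x) \<le> norm (R v - R w) * norm x" by (rule norm_blinfun)
    finally have "e / 2 * norm x < norm (R v - R w) * norm x" using x c by linarith
    then show "e/2 < norm (R v - R w)" using nx by (simp add: mult_less_cancel_right)
  qed
qed

lemma R_right:
  fixes R :: "real \<Rightarrow> 'h::real_normed_vector \<Rightarrow>\<^sub>L 'h"
  assumes strong: "\<forall>x. continuous_on {0..} (\<lambda>t. blinfun_apply (R t) x)" and bv: "bv_on_compacts R"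
    and u: "0 \<le> u" and e: "0 < e"
  shows "\<exists>\<delta>>0. \<forall>v. u < v \<and> v < u + \<delta> \<longrightarrow> norm (R v - R u) \<le> e"
proof (rule ccontr)
  assume "\<not> ?thesis"
  then have H: "\<And>\<delta>. \<delta> > 0 \<Longrightarrow> \<exists>v. u < v \<and> v < u + \<delta> \<and> e < norm (R v - R u)"
    by (auto simp: not_le)
  have "\<forall>\<delta>. \<exists>p. \<delta> > 0 \<longrightarrow> u < fst p \<and> fst p < snd p \<and> snd p < u + \<delta> \<and> e/2 < norm (R (snd p) - R (fst p))"
  proof (intro allI impI)
    fix \<delta> :: real
    show "\<exists>p. \<delta> > 0 \<longrightarrow> u < fst p \<and> fst p < snd p \<and> snd p < u + \<delta> \<and> e/2 < norm (R (snd p) - R (fst p))"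
    proof (cases "\<delta> > 0")
      case True
      from H[OF True] obtain v where v: "u < v" "v < u + \<delta>" "e < norm (R v - R u)" by blast
      from jump_split[OF strong u e v(3)] obtain \<eta> where eta: "\<eta> > 0"
        and eta2: "\<And>w. w \<ge> 0 \<Longrightarrow> \<bar>w - u\<bar> < \<eta> \<Longrightarrow> e/2 < norm (R v - R w)" by blast
      define w where "w = u + min \<eta> (v - u) / 2"
      have "u < w" "w < v" "0 \<le> w" "\<bar>w - u\<bar> < \<eta>" using eta v u unfolding w_def by (auto simp: min_def field_simps)
      then show ?thesis using eta2[of w] v by (intro exI[of _ "(w, v)"]) auto
    qed simp
  qed
  then obtain P where P: "\<And>\<delta>. \<delta> > 0 \<Longrightarrow> u < fst (P \<delta>) \<and> fst (P \<delta>) < snd (P \<delta>) \<and> snd (P \<delta>) < u + \<delta> \<and> e/2 < norm (R (snd (P \<delta>)) - R (fst (P \<delta>)))"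
    by metis
  define q where "q = rec_nat (P 1) (\<lambda>k qk. P (fst qk - u))"
  have q0: "q 0 = P 1" and qS: "\<And>k. q (Suc k) = P (fst (q k) - u)" unfolding q_def by simp_all
  have Q: "u < fst (q k) \<and> fst (q k) < snd (q k) \<and> snd (q k) < u + 1 \<and> e/2 < norm (R (snd (q k)) - R (fst (q k)))" for k
  proof (induction k)
    case 0 then show ?case using P[of 1] q0 by simp
  next
    case (Suc k)
    then have "fst (q k) - u > 0" by simp
    from P[OF this] Suc show ?case unfolding qS by auto
  qed
  have Q2: "snd (q (Suc k)) < fst (q k)" for k
    using P[of "fst (q k) - u"] Q[of k] unfolding qS by auto
  show False
    by (rule chain_contra_desc[where R=R and e="e/2" and T="u+1" and q=q, OF bv _ _ _ Q2]) (use Q u e in \<open>auto intro: order.strict_trans1\<close>)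
qed

lemma R_left:
  fixes R :: "real \<Rightarrow> 'h::real_normed_vector \<Rightarrow>\<^sub>L 'h"
  assumes strong: "\<forall>x. continuous_on {0..} (\<lambda>t. blinfun_apply (R t) x)" and bv: "bv_on_compacts R"
    and u: "0 < u" and e: "0 < e"
  shows "\<exists>\<delta>>0. \<forall>v. u - \<delta> < v \<and> v < u \<longrightarrow> norm (R v - R u) \<le> e"
proof (rule ccontr)
  assume "\<not> ?thesis"
  then have H: "\<And>\<delta>. \<delta> > 0 \<Longrightarrow> \<exists>v. u - \<delta> < v \<and> v < u \<and> e < norm (R v - R u)"
    by (auto simp: not_le)
  have "\<forall>\<delta>. \<exists>p. \<delta> > 0 \<longrightarrow> max 0 (u - \<delta>) < fst p \<and> fst p < snd p \<and> snd p < u \<and> e/2 < norm (R (snd p) - R (fst p))"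
  proof (intro allI impI)
    fix \<delta> :: real
    show "\<exists>p. \<delta> > 0 \<longrightarrow> max 0 (u - \<delta>) < fst p \<and> fst p < snd p \<and> snd p < u \<and> e/2 < norm (R (snd p) - R (fst p))"
    proof (cases "\<delta> > 0")
      case True
      then have "min \<delta> u > 0" using u by simp
      from H[OF this] obtain v where v: "u - min \<delta> u < v" "v < u" "e < norm (R v - R u)" by blast
      from jump_split[OF strong _ e v(3)] u obtain \<eta> where eta: "\<eta> > 0"
        and eta2: "\<And>w. w \<ge> 0 \<Longrightarrow> \<bar>w - u\<bar> < \<eta> \<Longrightarrow> e/2 < norm (R v - R w)" by auto
      have v0: "0 < v" using v(1) min.cobounded2[of \<delta> u] by linarith
      define w where "w = u - min \<eta> (u - v) / 2"
      have "v < w" "w < u" "0 \<le> w" "\<bar>w - u\<bar> < \<eta>" using eta v u v0 unfolding w_def by (auto simp: min_def field_simps)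
      moreover have "e/2 < norm (R w - R v)" using eta2[of w] \<open>0 \<le> w\<close> \<open>\<bar>w - u\<bar> < \<eta>\<close> by (simp add: norm_minus_commute)
      ultimately show ?thesis using v by (intro exI[of _ "(v, w)"]) auto
    qed simp
  qed
  then obtain P where P: "\<And>\<delta>. \<delta> > 0 \<Longrightarrow> max 0 (u - \<delta>) < fst (P \<delta>) \<and> fst (P \<delta>) < snd (P \<delta>) \<and> snd (P \<delta>) < u \<and> e/2 < norm (R (snd (P \<delta>)) - R (fst (P \<delta>)))"
    by metis
  define q where "q = rec_nat (P u) (\<lambda>k qk. P (u - snd qk))"
  have q0: "q 0 = P u" and qS: "\<And>k. q (Suc k) = P (u - snd (q k))" unfolding q_def by simp_all
  have Q: "0 < fst (q k) \<and> fst (q k) < snd (q k) \<and> snd (q k) < u \<and> e/2 < norm (R (snd (q k)) - R (fst (q k)))" for k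
  proof (induction k)
    case 0 then show ?case using P[of u] q0 u by simp
  next
    case (Suc k)
    then have "u - snd (q k) > 0" by simp
    from P[OF this] Suc show ?case unfolding qS by auto
  qed
  have Q2: "snd (q k) < fst (q (Suc k))" for k
    using P[of "u - snd (q k)"] Q[of k] unfolding qS by auto
  show False
    by (rule chain_contra_asc[where R=R and e="e/2" and T="u" and q=q, OF bv _ _ _ Q2]) (use Q u e in auto)
qed

lemma R_norm_cont:
  fixes R :: "real \<Rightarrow> 'h::real_normed_vector \<Rightarrow>\<^sub>L 'h"
  assumes strong: "\<forall>x. continuous_on {0..} (\<lambda>t. blinfun_apply (R t) x)" and bv: "bv_on_compacts R"
  shows "continuous_on {0..} R"
  unfolding continuous_on_iff
proof (intro ballI allI impI)
  fix u e :: real assume u: "u \<in> {0..}" and e: "0 < e"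
  then have u0: "0 \<le> u" "0 < e/2" by auto
  obtain d1 where d1: "d1 > 0" "\<And>v. u < v \<and> v < u + d1 \<Longrightarrow> norm (R v - R u) \<le> e/2"
    using R_right[OF strong bv u0] by blast
  show "\<exists>d>0. \<forall>v\<in>{0..}. dist v u < d \<longrightarrow> dist (R v) (R u) < e"
  proof (cases "u = 0")
    case True
    show ?thesis
    proof (intro exI[of _ d1] conjI ballI impI d1)
      fix v :: real assume "v \<in> {0..}" "dist v u < d1"
      then have "v = u \<or> (u < v \<and> v < u + d1)" using True by (auto simp: dist_real_def)
      then show "dist (R v) (R u) < e" using d1(2)[of v] e by (auto simp: dist_norm)
    qed
  next
    case False
    then have "0 < u" using u0 by simp
    obtain d2 where d2: "d2 > 0" "\<And>v. u - d2 < v \<and> v < u \<Longrightarrow> norm (R v - R u) \<le> e/2"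
      using R_left[OF strong bv \<open>0 < u\<close> u0(2)] by blast
    show ?thesis
    proof (intro exI[of _ "min d1 d2"] conjI ballI impI)
      show "min d1 d2 > 0" using d1 d2 by simp
      fix v :: real assume "v \<in> {0..}" "dist v u < min d1 d2"
      then have "v = u \<or> (u < v \<and> v < u + d1) \<or> (u - d2 < v \<and> v < u)" by (auto simp: dist_real_def)
      then show "dist (R v) (R u) < e" using d1(2)[of v] d2(2)[of v] e by (auto simp: dist_norm)
    qed
  qed
qed


lemma partition_mono:
  assumes "is_partition a b n r" "i \<le> j" "j \<le> n"
  shows "r i \<le> r j"
proof -
  have "\<forall>j. i \<le> j \<longrightarrow> j \<le> n \<longrightarrow> r i \<le> r j"
  proof (intro allI impI)
    fix j assume "i \<le> j" "j \<le> n"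
    then show "r i \<le> r j"
    proof (induction j)
      case 0 then show ?case by simp
    next
      case (Suc j)
      show ?case
      proof (cases "i = Suc j")
        case False
        then have "r i \<le> r j" using Suc by simp
        moreover have "r j < r (Suc j)" using Suc(3) assms(1) unfolding is_partition_def by simp
        ultimately show ?thesis by simp
      qed simp
    qed
  qed
  then show ?thesis using assms by blast
qed

lemma partition_range:
  assumes "is_partition a b n r" "i \<le> n"
  shows "a \<le> r i" "r i \<le> b"
  using partition_mono[OF assms(1), of 0 i] partition_mono[OF assms(1), of i n] assms
  unfolding is_partition_def by auto

lemma partition_step_le_mesh:
  assumes "is_partition a b n r" "i < n"
  shows "r (Suc i) - r i \<le> mesh n r"
  unfolding mesh_def using assms by (intro Max_ge) auto

lemma integral_partition_sum:
  fixes g :: "real \<Rightarrow> 'b::banach"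
  assumes P: "is_partition 0 t n r" and cont: "continuous_on {0..t} g"
  shows "integral {0..t} g = (\<Sum>i<n. integral {r i..r (Suc i)} g)"
proof -
  have "k \<le> n \<Longrightarrow> integral {0..r k} g = (\<Sum>i<k. integral {r i..r (Suc i)} g)" for k
  proof (induction k)
    case 0 then show ?case using P by (simp add: is_partition_def)
  next
    case (Suc k)
    have r: "0 \<le> r k" "r k \<le> r (Suc k)" "r (Suc k) \<le> t"
      using partition_range[OF P, of k] partition_range[OF P, of "Suc k"] partition_mono[OF P, of k "Suc k"] Suc.prems
      by auto
    have gi: "g integrable_on {0..r (Suc k)}"
      by (rule integrable_continuous_real, rule continuous_on_subset[OF cont]) (use r in auto)
    have "integral {0..r k} g + integral {r k..r (Suc k)} g = integral {0..r (Suc k)} g"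
      by (rule Henstock_Kurzweil_Integration.integral_combine[OF _ _ gi]) (use r in auto)
    then show ?case using Suc by simp
  qed
  from this[of n] P show ?thesis by (simp add: is_partition_def)
qed

lemma riemann_bound:
  fixes g :: "real \<Rightarrow> 'b::banach"
  assumes cont: "continuous_on {0..t} g" and e: "0 < e"
  shows "\<exists>\<delta>>0. \<forall>n r s. is_partition 0 t n r \<and> mesh n r < \<delta> \<and> (\<forall>i<n. r i \<le> s i \<and> s i \<le> r (Suc i)) \<longrightarrow>
      norm ((\<Sum>i<n. (r (Suc i) - r i) *\<^sub>R g (s i)) - integral {0..t} g) \<le> e * t"
proof -
  have "uniformly_continuous_on {0..t} g" by (rule compact_uniformly_continuous[OF cont]) simp
  then obtain d where d: "d > 0" and dd: "\<And>x x'. x \<in> {0..t} \<Longrightarrow> x' \<in> {0..t} \<Longrightarrow> dist x' x < d \<Longrightarrow> dist (g x') (g x) < e"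
    unfolding uniformly_continuous_on_def using e by metis
  show ?thesis
  proof (intro exI[of _ d] conjI allI impI d)
    fix n r s
    assume H: "is_partition 0 t n r \<and> mesh n r < d \<and> (\<forall>i<n. r i \<le> s i \<and> s i \<le> r (Suc i))"
    then have P: "is_partition 0 t n r" and md: "mesh n r < d" and s: "\<And>i. i < n \<Longrightarrow> r i \<le> s i \<and> s i \<le> r (Suc i)" by auto
    have piece: "norm ((r (Suc i) - r i) *\<^sub>R g (s i) - integral {r i..r (Suc i)} g) \<le> e * (r (Suc i) - r i)" if i: "i < n" for i
    proof -
      have r: "0 \<le> r i" "r i < r (Suc i)" "r (Suc i) \<le> t"
        using partition_range[OF P, of i] partition_range[OF P, of "Suc i"] i P by (auto simp: is_partition_def)
      have cs: "continuous_on {r i..r (Suc i)} g" by (rule continuous_on_subset[OF cont]) (use r in auto)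
      have "(r (Suc i) - r i) *\<^sub>R g (s i) - integral {r i..r (Suc i)} g = integral {r i..r (Suc i)} (\<lambda>x. g (s i) - g x)"
        using r by (subst integral_diff) (auto intro!: integrable_continuous_real cs)
      also have "norm \<dots> \<le> e * (r (Suc i) - r i)"
      proof (rule integral_bound)
        show "r i \<le> r (Suc i)" using r by simp
        show "continuous_on {r i..r (Suc i)} (\<lambda>x. g (s i) - g x)" by (intro continuous_intros cs)
        fix x assume x: "x \<in> {r i..r (Suc i)}"
        have "\<bar>s i - x\<bar> \<le> r (Suc i) - r i" using x s[OF i] by auto
        also have "\<dots> \<le> mesh n r" by (rule partition_step_le_mesh[OF P i])
        finally have "dist (s i) x < d" using md by (simp add: dist_real_def)
        then have "dist (g (s i)) (g x) < e" using dd[of x "s i"] x s[OF i] r by auto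
        then show "norm (g (s i) - g x) \<le> e" by (simp add: dist_norm)
      qed
      finally show ?thesis .
    qed
    have "(\<Sum>i<n. (r (Suc i) - r i) *\<^sub>R g (s i)) - integral {0..t} g = (\<Sum>i<n. (r (Suc i) - r i) *\<^sub>R g (s i) - integral {r i..r (Suc i)} g)"
      by (simp add: integral_partition_sum[OF P cont] sum_subtractf)
    also have "norm \<dots> \<le> (\<Sum>i<n. e * (r (Suc i) - r i))"
      by (rule order.trans[OF norm_sum sum_mono]) (use piece in auto)
    also have "\<dots> = e * (r n - r 0)" by (simp add: sum_distrib_left[symmetric] sum_lessThan_telescope)
    also have "\<dots> = e * t" using P by (simp add: is_partition_def)
    finally show "norm ((\<Sum>i<n. (r (Suc i) - r i) *\<^sub>R g (s i)) - integral {0..t} g) \<le> e * t" .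
  qed
qed

lemma lint_eq_integral:
  fixes g :: "real \<Rightarrow> complex"
  assumes "continuous_on {0..t} g"
  shows "(LINT s:{0..t}|lborel. g s) = integral {0..t} g"
proof -
  have "set_integrable lborel {0..t} g" unfolding set_integrable_def
    by (rule borel_integrable_compact) (use assms in auto)
  then show ?thesis by (rule set_borel_integral_eq_integral)
qed


lemma iexp_diff_bound: "cmod (iexp a - iexp b) \<le> \<bar>a - b\<bar>"
proof -
  have "iexp a - iexp b = iexp b * (iexp (a - b) - 1)"
    by (simp add: algebra_simps exp_add[symmetric] of_real_diff)
  also have "cmod \<dots> = cmod (iexp (a - b) - 1)" by (simp add: norm_mult)
  also have "\<dots> \<le> \<bar>a - b\<bar>" using iexp_approx1[of "a - b" 0] by simp
  finally show ?thesis .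
qed

lemma iexp_diff_bound2: "cmod (iexp a - iexp b) \<le> 2"
proof -
  have "cmod (iexp a - iexp b) \<le> cmod (iexp a) + cmod (iexp b)" by (rule norm_triangle_ineq4)
  then show ?thesis by simp
qed

lemma measurable_iexp_inner[measurable]:
  fixes X :: "'a \<Rightarrow> 'h::{real_inner,second_countable_topology}"
  assumes [measurable]: "X \<in> borel_measurable M"
  shows "(\<lambda>\<omega>. iexp (lam \<bullet> X \<omega>)) \<in> borel_measurable M"
proof -
  have "continuous_on UNIV (\<lambda>z::'h. iexp (lam \<bullet> z))" by (intro continuous_intros)
  then have "(\<lambda>z::'h. iexp (lam \<bullet> z)) \<in> borel_measurable borel" by (rule borel_measurable_continuous_onI)
  from measurable_compose[OF assms this] show ?thesis by simp
qed

lemma charfun_close: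
  fixes X Y :: "'a \<Rightarrow> 'h::{real_inner,second_countable_topology}"
  assumes P: "prob_space M" and [measurable]: "X \<in> borel_measurable M" "Y \<in> borel_measurable M" and eps: "0 < \<epsilon>"
  shows "cmod ((\<integral>\<omega>. iexp (lam \<bullet> X \<omega>) \<partial>M) - (\<integral>\<omega>. iexp (lam \<bullet> Y \<omega>) \<partial>M))
     \<le> norm lam * \<epsilon> + 2 * measure M {\<omega>\<in>space M. \<epsilon> < norm (X \<omega> - Y \<omega>)}"
proof -
  interpret prob_space M by fact
  define A where "A = {\<omega>\<in>space M. \<epsilon> < norm (X \<omega> - Y \<omega>)}"
  have A[measurable]: "A \<in> sets M" unfolding A_def by measurable
  have intX: "integrable M (\<lambda>\<omega>. iexp (lam \<bullet> X \<omega>))"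
    by (rule integrable_const_bound[where B=1]) auto
  have intY: "integrable M (\<lambda>\<omega>. iexp (lam \<bullet> Y \<omega>))"
    by (rule integrable_const_bound[where B=1]) auto
  have "(\<integral>\<omega>. iexp (lam \<bullet> X \<omega>) \<partial>M) - (\<integral>\<omega>. iexp (lam \<bullet> Y \<omega>) \<partial>M) = (\<integral>\<omega>. iexp (lam \<bullet> X \<omega>) - iexp (lam \<bullet> Y \<omega>) \<partial>M)"
    using intX intY by simp
  also have "cmod \<dots> \<le> (\<integral>\<omega>. cmod (iexp (lam \<bullet> X \<omega>) - iexp (lam \<bullet> Y \<omega>)) \<partial>M)"
    by (rule integral_norm_bound)
  also have "\<dots> \<le> (\<integral>\<omega>. norm lam * \<epsilon> + 2 * indicator A \<omega> \<partial>M)"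
  proof (rule integral_mono)
    show "integrable M (\<lambda>\<omega>. cmod (iexp (lam \<bullet> X \<omega>) - iexp (lam \<bullet> Y \<omega>)))"
      using intX intY by auto
    show "integrable M (\<lambda>\<omega>. norm lam * \<epsilon> + 2 * indicator A \<omega>)"
      using A by (intro Bochner_Integration.integrable_add integrable_mult_right integrable_real_indicator) (auto simp: less_top[symmetric] emeasure_finite)
    fix \<omega> assume "\<omega> \<in> space M"
    show "cmod (iexp (lam \<bullet> X \<omega>) - iexp (lam \<bullet> Y \<omega>)) \<le> norm lam * \<epsilon> + 2 * indicator A \<omega>"
    proof (cases "\<omega> \<in> A")
      case True
      have "0 \<le> norm lam * \<epsilon>" using eps by simp
      then show ?thesis using True iexp_diff_bound2[of "lam \<bullet> X \<omega>" "lam \<bullet> Y \<omega>"] by simp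
    next
      case False
      with \<open>\<omega> \<in> space M\<close> have "norm (X \<omega> - Y \<omega>) \<le> \<epsilon>" unfolding A_def by auto
      have "cmod (iexp (lam \<bullet> X \<omega>) - iexp (lam \<bullet> Y \<omega>)) \<le> \<bar>lam \<bullet> X \<omega> - lam \<bullet> Y \<omega>\<bar>" by (rule iexp_diff_bound)
      also have "\<dots> = \<bar>lam \<bullet> (X \<omega> - Y \<omega>)\<bar>" by (simp add: inner_diff_right)
      also have "\<dots> \<le> norm lam * norm (X \<omega> - Y \<omega>)" by (rule Cauchy_Schwarz_ineq2)
      also have "\<dots> \<le> norm lam * \<epsilon>" by (intro mult_left_mono) (use \<open>norm (X \<omega> - Y \<omega>) \<le> \<epsilon>\<close> in auto)
      finally show ?thesis using False by simp
    qed
  qed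
  also have "\<dots> = norm lam * \<epsilon> + 2 * measure M A"
    using A by (subst Bochner_Integration.integral_add) (auto intro!: integrable_real_indicator simp: prob_space less_top[symmetric] emeasure_finite)
  finally show ?thesis unfolding A_def .
qed


lemma charfun_sum:
  fixes Z :: "real \<Rightarrow> 'a \<Rightarrow> 'h::{real_inner,second_countable_topology}" and \<psi> :: "'h \<Rightarrow> complex"
  assumes P: "prob_space M" and L: "levy_process M Z"
    and psi: "\<forall>s\<ge>0. \<forall>y. integral\<^sup>L M (\<lambda>\<omega>. exp (\<i> * complex_of_real (y \<bullet> Z s \<omega>))) = exp (complex_of_real s * \<psi> y)"
    and part: "is_partition 0 t n r"
  shows "(\<integral>\<omega>. iexp (\<Sum>i<n. y i \<bullet> (Z (r (Suc i)) \<omega> - Z (r i) \<omega>)) \<partial>M)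
           = exp (\<Sum>i<n. complex_of_real (r (Suc i) - r i) * \<psi> (y i))"
proof -
  interpret prob_space M by fact
  have meas: "\<And>s. s \<ge> 0 \<Longrightarrow> Z s \<in> borel_measurable M" using L unfolding levy_process_def by blast
  have rpos: "\<And>i. i \<le> n \<Longrightarrow> 0 \<le> r i" using partition_range(1)[OF part] by blast
  have rinc: "\<And>i. i < n \<Longrightarrow> r i < r (Suc i)" using part unfolding is_partition_def by blast
  have measD: "(\<lambda>\<omega>. Z (r (Suc i)) \<omega> - Z (r i) \<omega>) \<in> borel_measurable M" if "i < n" for i
    using meas[OF rpos[of i]] meas[OF rpos[of "Suc i"]] that by (intro borel_measurable_diff) auto
  have ind: "indep_vars (\<lambda>_. borel) (\<lambda>i \<omega>. Z (r (Suc i)) \<omega> - Z (r i) \<omega>) {..<n}"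
    using L rpos rinc unfolding levy_process_def by (meson less_imp_le)
  have cm: "(\<lambda>z::'h. iexp (v \<bullet> z)) \<in> borel_measurable borel" for v
  proof -
    have "continuous_on UNIV (\<lambda>z::'h. iexp (v \<bullet> z))" by (intro continuous_intros)
    then show ?thesis by (rule borel_measurable_continuous_onI)
  qed
  have ind2: "indep_vars (\<lambda>_. borel) (\<lambda>i \<omega>. iexp (y i \<bullet> (Z (r (Suc i)) \<omega> - Z (r i) \<omega>))) {..<n}"
    using indep_vars_compose2[OF ind, of "\<lambda>i z. iexp (y i \<bullet> z)" "\<lambda>_. borel"] cm by simp
  have intg: "integrable M (\<lambda>\<omega>. iexp (y i \<bullet> (Z (r (Suc i)) \<omega> - Z (r i) \<omega>)))" if "i \<in> {..<n}" for i
    using measD[of i] that by (intro integrable_const_bound[where B=1]) (auto intro: measurable_compose[OF _ cm])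
  have each: "(\<integral>\<omega>. iexp (y i \<bullet> (Z (r (Suc i)) \<omega> - Z (r i) \<omega>)) \<partial>M) = exp (complex_of_real (r (Suc i) - r i) * \<psi> (y i))"
    if i: "i < n" for i
  proof -
    define h where "h = r (Suc i) - r i"
    have a: "0 \<le> r i" and h: "0 \<le> h" using rpos[of i] rinc[OF i] i unfolding h_def by auto
    have st0: "distr M borel (\<lambda>\<omega>. Z (r i + h) \<omega> - Z (r i) \<omega>) = distr M borel (Z h)"
      using L a h unfolding levy_process_def by blast
    have ah: "r i + h = r (Suc i)" unfolding h_def by simp
    have st: "distr M borel (\<lambda>\<omega>. Z (r (Suc i)) \<omega> - Z (r i) \<omega>) = distr M borel (Z h)"
      using st0 unfolding ah .
    have "(\<integral>\<omega>. iexp (y i \<bullet> (Z (r (Suc i)) \<omega> - Z (r i) \<omega>)) \<partial>M)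
        = integral\<^sup>L (distr M borel (\<lambda>\<omega>. Z (r (Suc i)) \<omega> - Z (r i) \<omega>)) (\<lambda>z. iexp (y i \<bullet> z))"
      using measD[OF i] by (subst integral_distr) (auto intro: cm)
    also have "\<dots> = integral\<^sup>L (distr M borel (Z h)) (\<lambda>z. iexp (y i \<bullet> z))" unfolding st ..
    also have "\<dots> = (\<integral>\<omega>. iexp (y i \<bullet> Z h \<omega>) \<partial>M)"
      using meas[OF h] by (subst integral_distr) (auto intro: cm)
    also have "\<dots> = exp (complex_of_real h * \<psi> (y i))" using psi h by simp
    finally show ?thesis unfolding h_def .
  qed
  have "(\<lambda>\<omega>. iexp (\<Sum>i<n. y i \<bullet> (Z (r (Suc i)) \<omega> - Z (r i) \<omega>)))
      = (\<lambda>\<omega>. \<Prod>i<n. iexp (y i \<bullet> (Z (r (Suc i)) \<omega> - Z (r i) \<omega>)))"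
    by (simp add: of_real_sum sum_distrib_left exp_sum)
  then have "(\<integral>\<omega>. iexp (\<Sum>i<n. y i \<bullet> (Z (r (Suc i)) \<omega> - Z (r i) \<omega>)) \<partial>M)
      = (\<Prod>i<n. \<integral>\<omega>. iexp (y i \<bullet> (Z (r (Suc i)) \<omega> - Z (r i) \<omega>)) \<partial>M)"
    using indep_vars_lebesgue_integral[OF _ ind2 intg] by simp
  also have "\<dots> = (\<Prod>i<n. exp (complex_of_real (r (Suc i) - r i) * \<psi> (y i)))"
    by (rule prod.cong) (auto simp: each)
  also have "\<dots> = exp (\<Sum>i<n. complex_of_real (r (Suc i) - r i) * \<psi> (y i))"
    by (simp add: exp_sum)
  finally show ?thesis .
qed


lemma eps_helper: "(x::real) \<ge> 0 \<Longrightarrow> e > 0 \<Longrightarrow> x * (e / (4 * (x + 1))) \<le> e / 4"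
  by (simp add: field_simps)

lemma uniform_partition:
  assumes t: "0 < t"
  shows "is_partition 0 t (Suc n) (\<lambda>i. real i * t / real (Suc n))"
    "mesh (Suc n) (\<lambda>i. real i * t / real (Suc n)) = t / real (Suc n)"
proof -
  have d: "real (Suc i) * t / real (Suc n) - real i * t / real (Suc n) = t / real (Suc n)" for i
  proof -
    have "real (Suc i) * t - real i * t = t" by (simp add: algebra_simps)
    then show ?thesis by (metis diff_divide_distrib)
  qed
  have e: "x * t / x = t" if "x \<noteq> 0" for x :: real using that by simp
  show "is_partition 0 t (Suc n) (\<lambda>i. real i * t / real (Suc n))"
    unfolding is_partition_def using t e[of "real (Suc n)"] by (auto simp: divide_strict_right_mono simp del: of_nat_Suc)
  have "(\<lambda>i. real (Suc i) * t / real (Suc n) - real i * t / real (Suc n)) ` {..<Suc n} = {t / real (Suc n)}"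
    unfolding d by auto
  then show "mesh (Suc n) (\<lambda>i. real i * t / real (Suc n)) = t / real (Suc n)"
    unfolding mesh_def by simp
qed

lemma eventually_mesh:
  assumes "0 < \<delta>" "0 < t"
  shows "\<exists>no. \<forall>n\<ge>no. t / real (Suc n) < \<delta>"
proof -
  obtain no :: nat where no: "t / \<delta> < no" using reals_Archimedean2 by blast
  have "t / real (Suc n) < \<delta>" if "n \<ge> no" for n
  proof -
    have "t / \<delta> < real (Suc n)" using no that by linarith
    then show ?thesis using assms by (simp add: divide_less_eq mult.commute)
  qed
  then show ?thesis by blast
qed

lemma adj_cont: "continuous_on UNIV (\<lambda>F::'h::{real_inner,complete_space} \<Rightarrow>\<^sub>L 'h. adjoint (blinfun_apply F) lam)"
  unfolding continuous_on_iff
proof (intro ballI allI impI)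
  fix F :: "'h \<Rightarrow>\<^sub>L 'h" and e :: real assume e: "0 < e"
  show "\<exists>d>0. \<forall>G\<in>UNIV. dist G F < d \<longrightarrow> dist (adjoint (blinfun_apply G) lam) (adjoint (blinfun_apply F) lam) < e"
  proof (intro exI[of _ "e / (norm lam + 1)"] conjI ballI impI)
    show "0 < e / (norm lam + 1)" using e by (simp add: add_nonneg_pos)
    fix G :: "'h \<Rightarrow>\<^sub>L 'h" assume "dist G F < e / (norm lam + 1)"
    then have nGF: "norm (G - F) * (norm lam + 1) < e" by (simp add: dist_norm pos_less_divide_eq add_nonneg_pos)
    have "dist (adjoint (blinfun_apply G) lam) (adjoint (blinfun_apply F) lam) \<le> norm (G - F) * norm lam"
      unfolding dist_norm by (rule adjoint_diff_bound)
    also have "\<dots> \<le> norm (G - F) * (norm lam + 1)" by (intro mult_left_mono) auto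
    finally show "dist (adjoint (blinfun_apply G) lam) (adjoint (blinfun_apply F) lam) < e" using nGF by linarith
  qed
qed

lemma measurable_conv_sum:
  fixes Z :: "real \<Rightarrow> 'a \<Rightarrow> 'h::{real_normed_vector,second_countable_topology}"
    and F :: "nat \<Rightarrow> 'h \<Rightarrow>\<^sub>L 'h"
  assumes meas: "\<And>s. s \<ge> 0 \<Longrightarrow> Z s \<in> borel_measurable M" and r: "\<And>i. i \<le> n \<Longrightarrow> 0 \<le> r i"
  shows "(\<lambda>\<omega>. \<Sum>i<n. blinfun_apply (F i) (Z (r (Suc i)) \<omega> - Z (r i) \<omega>)) \<in> borel_measurable M"
proof (rule borel_measurable_sum[where f="\<lambda>i \<omega>. blinfun_apply (F i) (Z (r (Suc i)) \<omega> - Z (r i) \<omega>)"])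
  fix i assume i: "i \<in> {..<n}"
  have "(\<lambda>\<omega>. Z (r (Suc i)) \<omega> - Z (r i) \<omega>) \<in> borel_measurable M"
    using meas r i by (intro borel_measurable_diff) auto
  moreover have "blinfun_apply (F i) \<in> borel_measurable borel"
    by (intro borel_measurable_continuous_onI blinfun.continuous_on continuous_on_id continuous_on_const)
  ultimately show "(\<lambda>\<omega>. blinfun_apply (F i) (Z (r (Suc i)) \<omega> - Z (r i) \<omega>)) \<in> borel_measurable M"
    by (rule measurable_compose)
qed

theorem proposition3:
  fixes M :: "'a measure"
    and DA :: "'h::{real_inner,complete_space,second_countable_topology} set"
    and A :: "'h \<Rightarrow> 'h"
    and a :: "real \<Rightarrow> real"
    and R :: "real \<Rightarrow> 'h \<Rightarrow>\<^sub>L 'h"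
    and Z :: "real \<Rightarrow> 'a \<Rightarrow> 'h"
    and \<psi> :: "'h \<Rightarrow> complex"
    and t :: real and lam :: 'h and I :: "'a \<Rightarrow> 'h"
  assumes "prob_space M"
    and "closed_densely_defined_operator DA A"
    and "locally_integrable_Rplus a"
    and "resolvent_family a DA A R"
    and "bv_on_compacts R"
    and "levy_process M Z"
    and "continuous_on UNIV \<psi>" and "\<psi> 0 = 0"
    and "\<forall>s\<ge>0. \<forall>y. integral\<^sup>L M (\<lambda>\<omega>. exp (\<i> * complex_of_real (y \<bullet> Z s \<omega>)))
                    = exp (complex_of_real s * \<psi> y)"
    and "0 < t"
    and "stoch_conv_integral M R Z t I"
  shows "integral\<^sup>L M (\<lambda>\<omega>. exp (\<i> * complex_of_real (lam \<bullet> I \<omega>)))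
           = exp (LINT s:{0..t}|lborel. \<psi> (adjoint (blinfun_apply (R (t - s))) lam))"
proof -
  note P = assms(1) and RF = assms(4) and bv = assms(5) and L = assms(6) and psic = assms(7)
    and psi = assms(9) and t = assms(10) and SC = assms(11)
  interpret prob_space M by fact
  have strong: "\<forall>x. continuous_on {0..} (\<lambda>t. blinfun_apply (R t) x)"
    using RF unfolding resolvent_family_def by blast
  have Rc: "continuous_on {0..} R" by (rule R_norm_cont[OF strong bv])
  define g where "g s = \<psi> (adjoint (blinfun_apply (R (t - s))) lam)" for s
  have Rtc: "continuous_on {0..t} (\<lambda>s. R (t - s))"
    by (rule continuous_on_compose2[OF Rc]) (auto intro!: continuous_intros)
  have gc: "continuous_on {0..t} g"
    unfolding g_def
    by (rule continuous_on_compose2[OF psic], rule continuous_on_compose2[OF adj_cont Rtc]) auto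
  define J where "J = integral {0..t} g"
  have J: "(LINT s:{0..t}|lborel. \<psi> (adjoint (blinfun_apply (R (t - s))) lam)) = J"
    unfolding J_def g_def[symmetric] by (rule lint_eq_integral[OF gc])
  define c where "c = (\<integral>\<omega>. iexp (lam \<bullet> I \<omega>) \<partial>M)"
  define r where "r n i = real i * t / real (Suc n)" for n i
  have part: "is_partition 0 t (Suc n) (r n)" and mesh: "mesh (Suc n) (r n) = t / real (Suc n)" for n
    unfolding r_def using uniform_partition[OF t] by auto
  define S where "S n \<omega> = (\<Sum>i<Suc n. blinfun_apply (R (t - r n i)) (Z (r n (Suc i)) \<omega> - Z (r n i) \<omega>))" for n \<omega>
  define Rm where "Rm n = (\<Sum>i<Suc n. complex_of_real (r n (Suc i) - r n i) * g (r n i))" for n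
  have meas: "\<And>s. s \<ge> 0 \<Longrightarrow> Z s \<in> borel_measurable M" using L unfolding levy_process_def by blast
  have Smeas: "S n \<in> borel_measurable M" for n
    unfolding S_def by (rule measurable_conv_sum[OF meas]) (use partition_range(1)[OF part[of n]] in auto)
  have Imeas: "I \<in> borel_measurable M" using SC unfolding stoch_conv_integral_def by blast
  have ES: "(\<integral>\<omega>. iexp (lam \<bullet> S n \<omega>) \<partial>M) = exp (Rm n)" for n
  proof -
    have "lam \<bullet> S n \<omega> = (\<Sum>i<Suc n. adjoint (blinfun_apply (R (t - r n i))) lam \<bullet> (Z (r n (Suc i)) \<omega> - Z (r n i) \<omega>))" for \<omega>
      unfolding S_def inner_sum_right
      by (intro sum.cong refl) (metis adjoint_prop inner_commute)
    then have "(\<integral>\<omega>. iexp (lam \<bullet> S n \<omega>) \<partial>M) = (\<integral>\<omega>. iexp (\<Sum>i<Suc n. adjoint (blinfun_apply (R (t - r n i))) lam \<bullet> (Z (r n (Suc i)) \<omega> - Z (r n i) \<omega>)) \<partial>M)"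
      by simp
    also have "\<dots> = exp (Rm n)"
      unfolding Rm_def g_def by (rule charfun_sum[OF P L psi part])
    finally show ?thesis .
  qed
  have lim1: "(\<lambda>n. \<integral>\<omega>. iexp (lam \<bullet> S n \<omega>) \<partial>M) \<longlonglongrightarrow> c"
    unfolding LIMSEQ_iff
  proof (intro allI impI)
    fix e :: real assume e: "0 < e"
    define \<epsilon> where "\<epsilon> = e / (4 * (norm lam + 1))"
    have eps: "0 < \<epsilon>" unfolding \<epsilon>_def using e by (simp add: add_nonneg_pos)
    have eta: "0 < e / 4" using e by simp
    have "\<forall>\<epsilon>>0. \<forall>\<eta>>0. \<exists>\<delta>>0. \<forall>n r s.
        is_partition 0 t n r \<and> mesh n r < \<delta> \<and> (\<forall>i<n. r i \<le> s i \<and> s i \<le> r (Suc i)) \<longrightarrow>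
        measure M {\<omega>\<in>space M.
           \<epsilon> < norm ((\<Sum>i<n. blinfun_apply (R (t - s i)) (Z (r (Suc i)) \<omega> - Z (r i) \<omega>)) - I \<omega>)} < \<eta>"
      using SC unfolding stoch_conv_integral_def by (rule conjunct2)
    then have "\<exists>\<delta>>0. \<forall>n r s.
        is_partition 0 t n r \<and> mesh n r < \<delta> \<and> (\<forall>i<n. r i \<le> s i \<and> s i \<le> r (Suc i)) \<longrightarrow>
        measure M {\<omega>\<in>space M.
           \<epsilon> < norm ((\<Sum>i<n. blinfun_apply (R (t - s i)) (Z (r (Suc i)) \<omega> - Z (r i) \<omega>)) - I \<omega>)} < e / 4"
      using eps eta by blast
    then obtain \<delta> where d: "\<delta> > 0" and dd0: "\<forall>n r s.
        is_partition 0 t n r \<and> mesh n r < \<delta> \<and> (\<forall>i<n. r i \<le> s i \<and> s i \<le> r (Suc i)) \<longrightarrow>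
        measure M {\<omega>\<in>space M.
           \<epsilon> < norm ((\<Sum>i<n. blinfun_apply (R (t - s i)) (Z (r (Suc i)) \<omega> - Z (r i) \<omega>)) - I \<omega>)} < e / 4"
      by blast
    note dd = dd0[rule_format]
    obtain no where no: "\<And>n. n \<ge> no \<Longrightarrow> t / real (Suc n) < \<delta>" using eventually_mesh[OF d t] by blast
    have "norm ((\<integral>\<omega>. iexp (lam \<bullet> S n \<omega>) \<partial>M) - c) < e" if n: "n \<ge> no" for n
    proof -
      have tags: "\<forall>i<Suc n. r n i \<le> r n i \<and> r n i \<le> r n (Suc i)"
        using partition_mono[OF part[of n]] by auto
      have pr: "measure M {\<omega>\<in>space M. \<epsilon> < norm (S n \<omega> - I \<omega>)} < e / 4"
        using dd[of "Suc n" "r n" "r n"] part[of n] mesh[of n] no[OF n] tags unfolding S_def by auto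
      have "norm ((\<integral>\<omega>. iexp (lam \<bullet> S n \<omega>) \<partial>M) - c) \<le> norm lam * \<epsilon> + 2 * measure M {\<omega>\<in>space M. \<epsilon> < norm (S n \<omega> - I \<omega>)}"
        unfolding c_def by (rule charfun_close[OF P Smeas Imeas eps])
      also have "norm lam * \<epsilon> \<le> e / 4"
        unfolding \<epsilon>_def using eps_helper[OF norm_ge_zero e] .
      finally show ?thesis using pr e by linarith
    qed
    then show "\<exists>no. \<forall>n\<ge>no. norm ((\<integral>\<omega>. iexp (lam \<bullet> S n \<omega>) \<partial>M) - c) < e" by blast
  qed
  have lim2: "Rm \<longlonglongrightarrow> J"
    unfolding LIMSEQ_iff
  proof (intro allI impI)
    fix e :: real assume e: "0 < e"
    have e': "0 < e / (2 * t)" using e t by simp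
    obtain \<delta> where d: "\<delta> > 0" and dd0: "\<forall>n r s. is_partition 0 t n r \<and> mesh n r < \<delta> \<and> (\<forall>i<n. r i \<le> s i \<and> s i \<le> r (Suc i)) \<longrightarrow>
      norm ((\<Sum>i<n. (r (Suc i) - r i) *\<^sub>R g (s i)) - integral {0..t} g) \<le> e / (2 * t) * t"
      using riemann_bound[OF gc e'] by blast
    note dd = dd0[rule_format]
    obtain no where no: "\<And>n. n \<ge> no \<Longrightarrow> t / real (Suc n) < \<delta>" using eventually_mesh[OF d t] by blast
    have "norm (Rm n - J) < e" if n: "n \<ge> no" for n
    proof -
      have tags: "\<forall>i<Suc n. r n i \<le> r n i \<and> r n i \<le> r n (Suc i)"
        using partition_mono[OF part[of n]] by auto
      have "norm (Rm n - J) \<le> e / (2 * t) * t"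
        using dd[of "Suc n" "r n" "r n"] part[of n] mesh[of n] no[OF n] tags
        unfolding Rm_def J_def by (simp add: scaleR_conv_of_real)
      also have "\<dots> < e" using e t by simp
      finally show ?thesis .
    qed
    then show "\<exists>no. \<forall>n\<ge>no. norm (Rm n - J) < e" by blast
  qed
  have "(\<lambda>n. exp (Rm n)) \<longlonglongrightarrow> exp J" by (intro tendsto_intros lim2)
  moreover have "(\<lambda>n. exp (Rm n)) \<longlonglongrightarrow> c" using lim1 unfolding ES .
  ultimately have "c = exp J" by (rule LIMSEQ_unique[rotated])
  then show ?thesis unfolding J c_def .
qed


end
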